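(* For any idempotent $e$ of a semigroup $S$, $$\big(\sqrt[\infty]{H_e}\cdot H_e\big)\cup\big(H_e\cdot \sqrt[\infty]{H_e}\big)\subseteq H_e .$$
   Context: For a subset $A$ of a semigroup $S$, $\sqrt[\infty]{A}=\{x\in S:\exists n\in\mathbb N\ (x^n\in A)\}$. $S^1=S\cup\{1\}$ with $1$ an adjoined identity. For $a\in S$, $H_a=\{x\in S: xS^1=aS^1 \text{ and } S^1x=S^1a\}$ is the $\mathcal H$-class of $a$; for an idempotent $e$, $H_e$ is the maximal subgroup of $S$ containing $e$. For sets $A,B\subseteq S$, $A\cdot B=\{ab:a\in A,b\in B\}$. *)

theory Defs
  imports Main
begin

text \<open>Semigroups are modelled by the type class semigroup_mult: the semigroup S is the
whole type. Powers x^n for n >= 1: spow x k = x^(k+1).\<close>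

fun spow :: "'a::semigroup_mult \<Rightarrow> nat \<Rightarrow> 'a" where
  "spow x 0 = x"
| "spow x (Suc k) = spow x k * x"

definition right_ideal1 :: "'a::semigroup_mult \<Rightarrow> 'a set" where
  "right_ideal1 a = insert a {a * s | s. True}"

definition left_ideal1 :: "'a::semigroup_mult \<Rightarrow> 'a set" where
  "left_ideal1 a = insert a {s * a | s. True}"

definition Hclass :: "'a::semigroup_mult \<Rightarrow> 'a set" where
  "Hclass a = {x. right_ideal1 x = right_ideal1 a \<and> left_ideal1 x = left_ideal1 a}"

definition root_inf :: "'a::semigroup_mult set \<Rightarrow> 'a set" where
  "root_inf A = {x. \<exists>n::nat. n \<ge> 1 \<and> spow x (n - 1) \<in> A}"

definition set_prod :: "'a::semigroup_mult set \<Rightarrow> 'a set \<Rightarrow> 'a set" where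
  "set_prod A B = {a * b | a b. a \<in> A \<and> b \<in> B}"

end

theory Submission
  imports Defs
begin

lemma spow_comm: "spow x k * x = x * (spow x k :: 'a::semigroup_mult)"
  by (induction k) (auto simp: mult.assoc)

lemma H_iff:
  fixes e y :: "'a::semigroup_mult"
  assumes ee: "e * e = e"
  shows "y \<in> Hclass e \<longleftrightarrow> e*y=y \<and> y*e=y \<and> (\<exists>a. a*y=e) \<and> (\<exists>b. y*b=e)"
proof
  assume "y \<in> Hclass e"
  hence R: "right_ideal1 y = right_ideal1 e" and L: "left_ideal1 y = left_ideal1 e"
    by (auto simp: Hclass_def)
  have "y \<in> right_ideal1 e" using R by (auto simp: right_ideal1_def)
  hence 1: "e*y=y" using ee by (auto simp: right_ideal1_def mult.assoc[symmetric])
  have "y \<in> left_ideal1 e" using L by (auto simp: left_ideal1_def)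
  hence 2: "y*e=y" using ee by (auto simp: left_ideal1_def mult.assoc)
  have "e \<in> right_ideal1 y" using R by (auto simp: right_ideal1_def)
  hence 3: "\<exists>b. y*b=e" using ee by (auto simp: right_ideal1_def)
  have "e \<in> left_ideal1 y" using L by (auto simp: left_ideal1_def)
  hence 4: "\<exists>a. a*y=e" using ee by (auto simp: left_ideal1_def)
  show "e*y=y \<and> y*e=y \<and> (\<exists>a. a*y=e) \<and> (\<exists>b. y*b=e)" using 1 2 3 4 by blast
next
  assume "e*y=y \<and> y*e=y \<and> (\<exists>a. a*y=e) \<and> (\<exists>b. y*b=e)"
  then obtain a b where 1: "e*y=y" and 2: "y*e=y" and a: "a*y=e" and b: "y*b=e" by blast
  have "right_ideal1 y = right_ideal1 e"
    unfolding right_ideal1_def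
    apply (rule equalityI)
     apply (auto)
       apply (metis 1)
      apply (metis 1 mult.assoc)
     apply (metis b)
    apply (metis b mult.assoc)
    done
  moreover have "left_ideal1 y = left_ideal1 e"
    unfolding left_ideal1_def
    apply (rule equalityI)
     apply (auto)
       apply (metis 2)
      apply (metis 2 mult.assoc)
     apply (metis a)
    apply (metis a mult.assoc)
    done
  ultimately show "y \<in> Hclass e" by (auto simp: Hclass_def)
qed

lemma main:
  fixes e x h :: "'a::semigroup_mult"
  assumes ee: "e * e = e" and xr: "x \<in> root_inf (Hclass e)" and hH: "h \<in> Hclass e"
  shows "x*h \<in> Hclass e \<and> h*x \<in> Hclass e"
proof -
  obtain k where gH: "spow x k \<in> Hclass e" using xr by (auto simp: root_inf_def)
  define g where "g = spow x k"
  have xg: "x*g = g*x" unfolding g_def using spow_comm by metis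
  have gq: "g = x \<or> (\<exists>q. g = x*q \<and> g = q*x)"
  proof (cases k)
    case 0 thus ?thesis by (simp add: g_def)
  next
    case (Suc m) thus ?thesis by (metis g_def spow.simps(2) spow_comm)
  qed
  from gH have g1: "e*g=g" "g*e=g" and "\<exists>a. a*g=e" "\<exists>b. g*b=e"
    using H_iff[OF ee] g_def by auto
  then obtain s t where s: "g*s=e" and t: "t*g=e" by blast
  define u where "u = e*s*e"
  have ug: "u*g=e" unfolding u_def by (metis t s g1 ee mult.assoc)
  have gu: "g*u=e" unfolding u_def by (metis s g1 ee mult.assoc)
  from hH have h1: "e*h=h" "h*e=h" and "\<exists>a. a*h=e" "\<exists>b. h*b=e"
    using H_iff[OF ee] by auto
  then obtain v w where v: "v*h=e" and w: "h*w=e" by blast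
  have xe: "x*e = g*x*u" using gu xg by (metis mult.assoc)
  have ex: "e*x = u*x*g" using ug xg by (metis mult.assoc)
  have exe1: "e*(x*e) = x*e" using xe g1 by (metis mult.assoc)
  have exe2: "(e*x)*e = e*x" using ex g1 by (metis mult.assoc)
  have comm: "x*e = e*x" using exe1 exe2 by (metis mult.assoc)
  have l1: "e*(x*h) = x*h" using comm h1 by (metis mult.assoc)
  have l2: "(x*h)*e = x*h" using h1 by (metis mult.assoc)
  have l3: "e*(h*x) = h*x" using h1 by (metis mult.assoc)
  have l4: "(h*x)*e = h*x" using comm h1 by (metis mult.assoc)
  from gq have "(\<exists>a. a*(x*h)=e) \<and> (\<exists>b. (x*h)*b=e) \<and> (\<exists>a. a*(h*x)=e) \<and> (\<exists>b. (h*x)*b=e)"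
  proof
    assume gx: "g = x"
    have "v*u*(x*h) = e" using gx ug v h1 by (metis mult.assoc)
    moreover have "(x*h)*(w*u) = e" using gx gu w comm g1 by (metis mult.assoc)
    moreover have "(u*v)*(h*x) = e" using gx ug v comm g1 by (metis mult.assoc)
    moreover have "(h*x)*(u*w) = e" using gx gu w h1 by (metis mult.assoc)
    ultimately show ?thesis by blast
  next
    assume "\<exists>q. g = x*q \<and> g = q*x"
    then obtain q where q1: "g = x*q" and q2: "g = q*x" by blast
    have "v*u*q*(x*h) = e" using q2 ug v h1 by (metis mult.assoc)
    moreover have "(x*h)*(w*q*u) = e"
    proof -
      have "(x*h)*(w*q*u) = x*e*q*u" using w by (metis mult.assoc)
      also have "\<dots> = e*g*u" using comm q1 by (metis mult.assoc)
      also have "\<dots> = e" using g1 gu by simp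
      finally show ?thesis .
    qed
    moreover have "(u*q*v)*(h*x) = e"
    proof -
      have "(u*q*v)*(h*x) = u*q*(e*x)" using v by (metis mult.assoc)
      also have "\<dots> = u*g*e" using comm q2 by (metis mult.assoc)
      also have "\<dots> = e" using ee ug by simp
      finally show ?thesis .
    qed
    moreover have "(h*x)*(q*u*w) = e" using q1 gu w h1 by (metis mult.assoc)
    ultimately show ?thesis by blast
  qed
  thus ?thesis using l1 l2 l3 l4 H_iff[OF ee] by blast
qed

theorem lemma3p1:
  fixes e :: "'a::semigroup_mult"
  assumes "e * e = e"
  shows "set_prod (root_inf (Hclass e)) (Hclass e) \<union> set_prod (Hclass e) (root_inf (Hclass e))
           \<subseteq> Hclass e"
  using main[OF assms] by (auto simp: set_prod_def)

end
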